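(* Assume the model (M.2) with $M_0>0$ and the sub-Gaussian condition (A.4) described in the context, and let Algorithm 2 be applied to $X_1,\ldots,X_N$. Let $C>64D/c_0$ be a constant. (i) For $k\in\{1,\ldots,M_0\}$ and an integer $\eta=\eta(N)$ with $1\le\eta\le N_{k+1}$, let $E_{k,N}$ be the event that there exist integers $0\le n_1<n_2<N_k$ and $1\le n_3\le\eta$ such that $\{X^{(k)}_n:n=n_1+1,\ldots,n_2\}$ and $\{X^{(k)}_n:n=n_2+1,\ldots,N_k\}\cup\{X^{(k+1)}_n:n=1,\ldots,n_3\}$ are two detected segments. If $f(N)\ge\max\{16|\mu_k-\mu_{k+1}|^2\eta,\ C\log N\}$, then $\Pr(\limsup_{N\to\infty}E_{k,N})=0$. (ii) For $k\in\{2,\ldots,M_0+1\}$ and an integer $\eta=\eta(N)$ with $1\le\eta\le N_{k-1}$, let $\tilde E_{k,N}$ be the event that there exist integers $1\le n_1<n_2\le N_k$ and $1\le n_3\le\eta$ such that $\{X^{(k-1)}_n:n=N_{k-1}-n_3+1,\ldots,N_{k-1}\}\cup\{X^{(k)}_n:n=1,\ldots,n_1\}$ and $\{X^{(k)}_n:n=n_1+1,\ldots,n_2\}$ are two detected segments. If $f(N)\ge\max\{16|\mu_{k-1}-\mu_k|^2\eta,\ C\log N\}$, then $\Pr(\limsup_{N\to\infty}\tilde E_{k,N})=0$.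
   Context: Model (M.2): for each sample size $N$ one observes independent random vectors $X_1,\ldots,X_N\in\mathbb{R}^D$ ($D\in\mathbb{N}$ fixed). There are $M_0\ge 0$ (fixed) change points $0=L_0<L_1<\cdots<L_{M_0}<L_{M_0+1}=N$ (depending on $N$), with segment sizes $N_k=L_k-L_{k-1}$, $N_k\to\infty$; for each $k$, $X_{L_{k-1}+1},\ldots,X_{L_k}$ are i.i.d. with distribution $\mathcal{G}_k$ with mean $\mu_k$ and finite covariance; $\mu_k\neq\mu_{k+1}$. Write $X^{(k)}_n=X_{L_{k-1}+n}$, $n=1,\ldots,N_k$. (A.4): there is $c_0>0$ such that for every $k$, coordinate $d$, $n\ge1$ and $a>0$, the mean $\bar Z$ of $n$ i.i.d. copies of the $d$-th marginal of $\mathcal{G}_k$ satisfies $\Pr(|\bar Z-E\bar Z|\ge a)\le2e^{-c_0a^2n}$. Quadratic loss: $\mathrm{Loss}_q(x_a,\ldots,x_b)=\sum_{n=a}^b|x_n-\bar x|^2$, $\bar x$ the sample mean, $|\cdot|$ Euclidean norm. Algorithm 2 (inputs $M_{\max}\ge1$, penalty $f(N)>0$, minimal segment size $\beta(N)$): for $k=0,1,\ldots,M_{\max}$ compute $\hat e_k=\min\sum_{j=1}^{k+1}\mathrm{Loss}_q(x_{\ell_{j-1}+1},\ldots,x_{\ell_j})$ over $0=\ell_0<\ell_1<\cdots<\ell_{k+1}=N$ with a minimizer; if its smallest segment has size $<\beta(N)$, set $M=k-1$ and stop (else $M=M_{\max}$). Output $\hat M=\arg\min_{0\le k\le M}(\hat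 e_k+kf(N))$ and the change points $\hat\ell_1<\cdots<\hat\ell_{\hat M}$ of the minimizer for $k=\hat M$. The detected segments are the blocks $\{X_n:n=\hat\ell_{j-1}+1,\ldots,\hat\ell_j\}$, $j=1,\ldots,\hat M+1$ ($\hat\ell_0=0,\hat\ell_{\hat M+1}=N$); "two detected segments" means two neighboring ones, in the order listed. $\limsup_N E_N$ is the event that $E_N$ occurs for infinitely many $N$. *)

theory Defs
  imports "HOL-Probability.Probability"
begin

text \<open>Data of a sample of size N: a function x with observations x 1, ..., x N.\<close>

definition seg_mean :: "(nat \<Rightarrow> real^'d) \<Rightarrow> nat \<Rightarrow> nat \<Rightarrow> real^'d" where
  "seg_mean x a b = (1 / real (b + 1 - a)) *\<^sub>R (\<Sum>n=a..b. x n)"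

definition loss_q :: "(nat \<Rightarrow> real^'d) \<Rightarrow> nat \<Rightarrow> nat \<Rightarrow> real" where
  "loss_q x a b = (\<Sum>n=a..b. (norm (x n - seg_mean x a b))\<^sup>2)"

definition valid_part :: "nat \<Rightarrow> nat \<Rightarrow> (nat \<Rightarrow> nat) \<Rightarrow> bool" where
  "valid_part N k l \<longleftrightarrow> l 0 = 0 \<and> l (k + 1) = N \<and> (\<forall>j\<le>k. l j < l (Suc j))"

definition seg_cost :: "(nat \<Rightarrow> real^'d) \<Rightarrow> nat \<Rightarrow> (nat \<Rightarrow> nat) \<Rightarrow> real" where
  "seg_cost x k l = (\<Sum>j=1..k+1. loss_q x (l (j - 1) + 1) (l j))"

definition is_minimizer :: "nat \<Rightarrow> (nat \<Rightarrow> real^'d) \<Rightarrow> nat \<Rightarrow> (nat \<Rightarrow> nat) \<Rightarrow> bool" where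
  "is_minimizer N x k l \<longleftrightarrow> valid_part N k l \<and>
     (\<forall>l'. valid_part N k l' \<longrightarrow> seg_cost x k l \<le> seg_cost x k l')"

definition min_seg_size :: "nat \<Rightarrow> (nat \<Rightarrow> nat) \<Rightarrow> nat" where
  "min_seg_size k l = Min ((\<lambda>j. l j - l (j - 1)) ` {1..k+1})"

text \<open>The algorithm uses a minimizer-selection rule sel: sel N x k is the minimizer used
  for k change points (sample size N, data x).  The stopping index M of Algorithm 2:
  the first k \<le> Mmax whose minimizer has a segment shorter than beta N gives M = k - 1
  (a k with no admissible segmentation, i.e. k \<ge> N, is also treated as a stop).\<close>
definition stop_bad :: "(nat \<Rightarrow> (nat \<Rightarrow> real^'d) \<Rightarrow> nat \<Rightarrow> nat \<Rightarrow> nat) \<Rightarrow> (nat \<Rightarrow> nat)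
    \<Rightarrow> nat \<Rightarrow> (nat \<Rightarrow> real^'d) \<Rightarrow> nat \<Rightarrow> bool" where
  "stop_bad sel beta N x k \<longleftrightarrow> N \<le> k \<or> min_seg_size k (sel N x k) < beta N"

definition stop_index :: "(nat \<Rightarrow> (nat \<Rightarrow> real^'d) \<Rightarrow> nat \<Rightarrow> nat \<Rightarrow> nat) \<Rightarrow> nat \<Rightarrow> (nat \<Rightarrow> nat)
    \<Rightarrow> nat \<Rightarrow> (nat \<Rightarrow> real^'d) \<Rightarrow> nat" where
  "stop_index sel Mmax beta N x =
     (if \<exists>k\<le>Mmax. stop_bad sel beta N x k
      then (LEAST k. k \<le> Mmax \<and> stop_bad sel beta N x k) - 1 else Mmax)"

definition pen_crit :: "(nat \<Rightarrow> (nat \<Rightarrow> real^'d) \<Rightarrow> nat \<Rightarrow> nat \<Rightarrow> nat) \<Rightarrow> (nat \<Rightarrow> real)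
    \<Rightarrow> nat \<Rightarrow> (nat \<Rightarrow> real^'d) \<Rightarrow> nat \<Rightarrow> real" where
  "pen_crit sel f N x k = seg_cost x k (sel N x k) + real k * f N"

text \<open>Two neighbouring detected segments {a+1..b} and {b+1..c} (global indices) of the
  output segmentation l with m change points.\<close>
definition two_detected :: "(nat \<Rightarrow> nat) \<Rightarrow> nat \<Rightarrow> nat \<Rightarrow> nat \<Rightarrow> nat \<Rightarrow> bool" where
  "two_detected l m a b c \<longleftrightarrow> (\<exists>j. 1 \<le> j \<and> j \<le> m \<and> l (j - 1) = a \<and> l j = b \<and> l (j + 1) = c)"

end

theory Submission
  imports Defs
begin

lemma sum_shift_ivl:
  fixes g :: "nat \<Rightarrow> 'b::comm_monoid_add"
  shows "(\<Sum>j\<in>{p<..p+n}. g j) = (\<Sum>j=1..n. g (p + j))"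
  by (rule sum.reindex_bij_witness[of _ "\<lambda>j. p + j" "\<lambda>j. j - p"]) auto

lemma vec_nth_borel_measurable[measurable]:
  "(\<lambda>x::real^'d. x $ i) \<in> borel_measurable borel"
  by (rule borel_measurable_continuous_onI) (intro continuous_intros)

lemma real_ev:
  fixes tt mm ss nn :: real
  assumes "nn > 0" "ss > 0"
  shows "((tt - nn * mm)\<^sup>2 \<ge> nn * ss) \<longleftrightarrow> (sqrt (ss/nn) \<le> \<bar>tt/nn - mm\<bar>)"
proof -
  have e: "\<bar>tt/nn - mm\<bar> = sqrt (((tt - nn * mm)/nn)\<^sup>2)" unfolding real_sqrt_abs using assms by (simp add: field_simps)
  have "sqrt (ss/nn) \<le> \<bar>tt/nn - mm\<bar> \<longleftrightarrow> ss/nn \<le> ((tt - nn * mm)/nn)\<^sup>2"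
    unfolding e real_sqrt_le_iff ..
  also have "\<dots> \<longleftrightarrow> nn * ss \<le> (tt - nn * mm)\<^sup>2" using assms by (simp add: field_simps power2_eq_square)
  finally show ?thesis by simp
qed

lemma coord_tail:
  fixes M :: "'a measure" and X :: "nat \<Rightarrow> 'a \<Rightarrow> real^'d" and G :: "(real^'d) measure"
    and \<mu> :: "real^'d" and i :: 'd
  assumes P: "prob_space M"
    and indep: "prob_space.indep_vars M (\<lambda>_. borel) X {1..N}"
    and distrX: "\<forall>n\<in>{p<..q}. distr M borel (X n) = G"
    and subG: "\<forall>n\<ge>1. \<forall>a>0.
        measure (PiM {1..n} (\<lambda>_. distr G borel (\<lambda>x. x $ i)))
          {z \<in> space (PiM {1..n} (\<lambda>_. distr G borel (\<lambda>x. x $ i))).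
             \<bar>(\<Sum>j=1..n. z j) / real n - \<mu> $ i\<bar> \<ge> a}
        \<le> 2 * exp (- c0 * a\<^sup>2 * real n)"
    and pq: "p < q" "q \<le> N" and s: "s > 0"
  shows "measure M {\<omega>\<in>space M. (\<Sum>j\<in>{p<..q}. X j \<omega> $ i - \<mu> $ i)\<^sup>2 \<ge> real (q-p) * s}
     \<le> 2 * exp (- c0 * s)"
proof -
  interpret prob_space M by (rule P)
  define n where "n = q - p"
  have n1: "n \<ge> 1" and qn: "q = p + n" using pq by (auto simp: n_def)
  define I where "I = {p<..q}"
  define Gi where "Gi = distr G borel (\<lambda>x. x $ i)"
  have meas: "X j \<in> borel_measurable M" if "j \<in> {1..N}" for j
    using indep that unfolding indep_vars_def by auto
  have IN: "I \<subseteq> {1..N}" using pq by (auto simp: I_def)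
  have ind2: "indep_vars (\<lambda>_. borel) (\<lambda>j \<omega>. X j \<omega> $ i) I"
    by (rule indep_vars_subset[OF indep_vars_compose2[OF indep] IN]) simp
  have Ine: "I \<noteq> {}" using pq by (auto simp: I_def)
  have D1: "distr M (PiM I (\<lambda>_. borel)) (\<lambda>\<omega>. \<lambda>j\<in>I. X j \<omega> $ i)
      = PiM I (\<lambda>j. distr M borel (\<lambda>\<omega>. X j \<omega> $ i))"
  proof (rule indep_vars_iff_distr_eq_PiM'[THEN iffD1, OF Ine _ ind2])
    fix j assume "j \<in> I"
    then have [measurable]: "X j \<in> borel_measurable M" using meas IN by auto
    show "(\<lambda>\<omega>. X j \<omega> $ i) \<in> borel_measurable M" by measurable
  qed
  have Gj: "distr M borel (\<lambda>\<omega>. X j \<omega> $ i) = Gi" if "j \<in> I" for j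
  proof -
    have "Gi = distr (distr M borel (X j)) borel (\<lambda>x. x $ i)"
      using distrX that by (simp add: Gi_def I_def)
    also have "\<dots> = distr M borel ((\<lambda>x. x $ i) \<circ> X j)"
      by (rule distr_distr) (use meas IN that in auto)
    finally show ?thesis by (simp add: comp_def)
  qed
  have setsGi: "sets Gi = sets borel" by (simp add: Gi_def)
  have prGi: "prob_space Gi"
  proof -
    have "q \<in> I" using pq by (auto simp: I_def)
    then have "Gi = distr M borel (\<lambda>\<omega>. X q \<omega> $ i)" using Gj by auto
    then show ?thesis using meas[of q] pq by (auto intro!: prob_space_distr)
  qed
  have D1': "distr M (PiM I (\<lambda>_. Gi)) (\<lambda>\<omega>. \<lambda>j\<in>I. X j \<omega> $ i) = PiM I (\<lambda>_. Gi)"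
  proof -
    have "distr M (PiM I (\<lambda>_. Gi)) (\<lambda>\<omega>. \<lambda>j\<in>I. X j \<omega> $ i)
        = distr M (PiM I (\<lambda>_. borel)) (\<lambda>\<omega>. \<lambda>j\<in>I. X j \<omega> $ i)"
      by (rule distr_cong) (auto intro!: sets_PiM_cong simp: setsGi)
    also have "\<dots> = PiM I (\<lambda>_. Gi)" unfolding D1 by (rule PiM_cong) (auto simp: Gj)
    finally show ?thesis .
  qed
  have cmeas: "(\<lambda>\<omega>. X j \<omega> $ i) \<in> measurable M Gi" if "j \<in> I" for j
  proof -
    have [measurable]: "X j \<in> borel_measurable M" using meas IN that by auto
    have "(\<lambda>\<omega>. X j \<omega> $ i) \<in> borel_measurable M" by measurable
    then show ?thesis using measurable_cong_sets[OF refl setsGi] by blast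
  qed
  have gmeas: "(\<lambda>\<omega>. \<lambda>j\<in>I. X j \<omega> $ i) \<in> measurable M (PiM I (\<lambda>_. Gi))"
    by (rule measurable_restrict) (rule cmeas)
  have D2: "distr (PiM I (\<lambda>_. Gi)) (PiM {1..n} (\<lambda>_. Gi)) (\<lambda>\<omega>. \<lambda>j\<in>{1..n}. \<omega> (p + j))
      = PiM {1..n} (\<lambda>_. Gi)"
    by (rule distr_PiM_reindex[where M="\<lambda>_. Gi" and f="\<lambda>j. p + j", simplified])
       (auto simp: prGi I_def qn inj_on_def)
  define h where "h = (\<lambda>\<omega>. \<lambda>j\<in>{1..n}. X (p + j) \<omega> $ i)"
  have tmeas: "(\<lambda>\<omega>. \<lambda>j\<in>{1..n}. \<omega> (p + j)) \<in> measurable (PiM I (\<lambda>_. Gi)) (PiM {1..n} (\<lambda>_. Gi))"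
    by (rule measurable_restrict) (rule measurable_component_singleton, auto simp: I_def qn)
  have hmeas: "h \<in> measurable M (PiM {1..n} (\<lambda>_. Gi))"
    unfolding h_def by (rule measurable_restrict) (rule cmeas, auto simp: I_def qn)
  have D3: "distr M (PiM {1..n} (\<lambda>_. Gi)) h = PiM {1..n} (\<lambda>_. Gi)"
  proof -
    have "distr M (PiM {1..n} (\<lambda>_. Gi)) h
       = distr M (PiM {1..n} (\<lambda>_. Gi)) ((\<lambda>\<omega>. \<lambda>j\<in>{1..n}. \<omega> (p + j)) \<circ> (\<lambda>\<omega>. \<lambda>j\<in>I. X j \<omega> $ i))"
      by (rule distr_cong) (auto simp: h_def I_def qn fun_eq_iff)
    also have "\<dots> = distr (distr M (PiM I (\<lambda>_. Gi)) (\<lambda>\<omega>. \<lambda>j\<in>I. X j \<omega> $ i))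
        (PiM {1..n} (\<lambda>_. Gi)) (\<lambda>\<omega>. \<lambda>j\<in>{1..n}. \<omega> (p + j))"
      by (rule distr_distr[symmetric, OF tmeas gmeas])
    also have "\<dots> = PiM {1..n} (\<lambda>_. Gi)" unfolding D1' by (rule D2)
    finally show ?thesis .
  qed
  define a where "a = sqrt (s / real n)"
  have apos: "a > 0" using s n1 by (simp add: a_def)
  define E where "E = {z \<in> space (PiM {1..n} (\<lambda>_. Gi)). \<bar>(\<Sum>j=1..n. z j) / real n - \<mu> $ i\<bar> \<ge> a}"
  have Eb: "E \<in> sets (PiM {1..n} (\<lambda>_. (borel :: real measure)))"
  proof -
    have "E = {z \<in> space (PiM {1..n} (\<lambda>_. (borel :: real measure))). \<bar>(\<Sum>j=1..n. z j) / real n - \<mu> $ i\<bar> \<ge> a}"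
      unfolding E_def by (simp add: space_PiM setsGi sets_eq_imp_space_eq[OF setsGi])
    also have "\<dots> \<in> sets (PiM {1..n} (\<lambda>_. (borel :: real measure)))" by measurable
    finally show ?thesis .
  qed
  have Es: "E \<in> sets (PiM {1..n} (\<lambda>_. Gi))"
    using Eb by (subst sets_PiM_cong[OF refl setsGi])
  have bound: "measure (PiM {1..n} (\<lambda>_. Gi)) E \<le> 2 * exp (- c0 * s)"
  proof -
    have "measure (PiM {1..n} (\<lambda>_. Gi)) E \<le> 2 * exp (- c0 * a\<^sup>2 * real n)"
      using subG n1 apos unfolding E_def Gi_def by auto
    also have "- c0 * a\<^sup>2 * real n = - c0 * s" using s n1 by (simp add: a_def)
    finally show ?thesis .
  qed
  have ev: "{\<omega>\<in>space M. (\<Sum>j\<in>{p<..q}. X j \<omega> $ i - \<mu> $ i)\<^sup>2 \<ge> real (q-p) * s} = h -` E \<inter> space M"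
  proof (intro set_eqI iffI)
    fix \<omega>
    have hsp: "\<omega> \<in> space M \<Longrightarrow> h \<omega> \<in> space (PiM {1..n} (\<lambda>_. Gi))"
      using hmeas by (rule measurable_space)
    have sh: "sum (h \<omega>) {Suc 0..n} = (\<Sum>j=1..n. X (p + j) \<omega> $ i)"
      by (rule sum.cong) (auto simp: h_def)
    have s2: "(\<Sum>j\<in>{p<..q}. X j \<omega> $ i - \<mu> $ i) = (\<Sum>j=1..n. X (p + j) \<omega> $ i) - real n * \<mu> $ i"
      unfolding qn sum_shift_ivl by (simp add: sum_subtractf)
    have "(real n * s \<le> ((\<Sum>j=1..n. X (p + j) \<omega> $ i) - real n * \<mu> $ i)\<^sup>2) \<longleftrightarrow>
          (a \<le> \<bar>(\<Sum>j=1..n. X (p + j) \<omega> $ i) / real n - \<mu> $ i\<bar>)"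
      unfolding a_def by (rule real_ev) (use n1 s in auto)
    then show "\<omega> \<in> {\<omega>\<in>space M. (\<Sum>j\<in>{p<..q}. X j \<omega> $ i - \<mu> $ i)\<^sup>2 \<ge> real (q-p) * s} \<Longrightarrow> \<omega> \<in> h -` E \<inter> space M"
      and "\<omega> \<in> h -` E \<inter> space M \<Longrightarrow> \<omega> \<in> {\<omega>\<in>space M. (\<Sum>j\<in>{p<..q}. X j \<omega> $ i - \<mu> $ i)\<^sup>2 \<ge> real (q-p) * s}"
      using hsp by (auto simp: E_def sh s2 simp flip: n_def)
  qed
  have "measure M (h -` E \<inter> space M) = measure (distr M (PiM {1..n} (\<lambda>_. Gi)) h) E"
    by (rule measure_distr[symmetric, OF hmeas Es])
  then show ?thesis unfolding ev D3 using bound by simp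
qed

lemma vec_tail:
  fixes M :: "'a measure" and X :: "nat \<Rightarrow> 'a \<Rightarrow> real^'d" and G :: "(real^'d) measure"
    and \<mu> :: "real^'d"
  assumes P: "prob_space M"
    and indep: "prob_space.indep_vars M (\<lambda>_. borel) X {1..N}"
    and distrX: "\<forall>n\<in>{p<..q}. distr M borel (X n) = G"
    and subG: "\<forall>i. \<forall>n\<ge>1. \<forall>a>0.
        measure (PiM {1..n} (\<lambda>_. distr G borel (\<lambda>x. x $ i)))
          {z \<in> space (PiM {1..n} (\<lambda>_. distr G borel (\<lambda>x. x $ i))).
             \<bar>(\<Sum>j=1..n. z j) / real n - \<mu> $ i\<bar> \<ge> a}
        \<le> 2 * exp (- c0 * a\<^sup>2 * real n)"
    and pq: "p < q" "q \<le> N" and t: "t > 0"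
  shows "measure M {\<omega>\<in>space M. (norm (\<Sum>j\<in>{p<..q}. X j \<omega> - \<mu>))\<^sup>2 \<ge> real (q-p) * t}
     \<le> 2 * real CARD('d) * exp (- c0 * t / real CARD('d))"
proof -
  interpret prob_space M by (rule P)
  define D where "D = real CARD('d)"
  have Dpos: "D > 0" by (simp add: D_def)
  define s where "s = t / D"
  have spos: "s > 0" using t Dpos by (simp add: s_def)
  have meas: "X j \<in> borel_measurable M" if "j \<in> {p<..q}" for j
    using indep that pq unfolding indep_vars_def by auto
  have m1[measurable]: "(\<lambda>\<omega>. \<Sum>j\<in>{p<..q}. X j \<omega> - \<mu>) \<in> borel_measurable M"
    by (rule borel_measurable_sum) (use meas in measurable)
  define A where "A i = {\<omega>\<in>space M. (\<Sum>j\<in>{p<..q}. X j \<omega> $ i - \<mu> $ i)\<^sup>2 \<ge> real (q-p) * s}" for i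
  have Ameas: "A i \<in> sets M" for i
  proof -
    have [measurable]: "(\<lambda>\<omega>. \<Sum>j\<in>{p<..q}. X j \<omega> $ i - \<mu> $ i) \<in> borel_measurable M"
      by (rule borel_measurable_sum) (use meas in measurable)
    show ?thesis unfolding A_def by measurable
  qed
  have sub: "{\<omega>\<in>space M. (norm (\<Sum>j\<in>{p<..q}. X j \<omega> - \<mu>))\<^sup>2 \<ge> real (q-p) * t} \<subseteq> (\<Union>i\<in>UNIV. A i)"
  proof
    fix \<omega> assume w: "\<omega> \<in> {\<omega>\<in>space M. (norm (\<Sum>j\<in>{p<..q}. X j \<omega> - \<mu>))\<^sup>2 \<ge> real (q-p) * t}"
    define v where "v = (\<Sum>j\<in>{p<..q}. X j \<omega> - \<mu>)"
    have vi: "v $ i = (\<Sum>j\<in>{p<..q}. X j \<omega> $ i - \<mu> $ i)" for i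
      by (simp add: v_def)
    have nv: "(norm v)\<^sup>2 = (\<Sum>i\<in>UNIV. (v $ i)\<^sup>2)"
      unfolding norm_vec_def L2_set_def by (simp add: sum_nonneg)
    show "\<omega> \<in> (\<Union>i\<in>UNIV. A i)"
    proof (rule ccontr)
      assume "\<omega> \<notin> (\<Union>i\<in>UNIV. A i)"
      then have lt: "(v $ i)\<^sup>2 < real (q-p) * s" for i using w by (auto simp: A_def vi not_le)
      have "(norm v)\<^sup>2 < (\<Sum>i\<in>(UNIV::'d set). real (q-p) * s)"
        unfolding nv by (rule sum_strict_mono) (auto intro: lt)
      also have "\<dots> = real (q-p) * t" using Dpos by (simp add: s_def D_def)
      finally show False using w by (simp add: v_def)
    qed
  qed
  have "measure M {\<omega>\<in>space M. (norm (\<Sum>j\<in>{p<..q}. X j \<omega> - \<mu>))\<^sup>2 \<ge> real (q-p) * t}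
      \<le> measure M (\<Union>i\<in>UNIV. A i)"
    by (rule finite_measure_mono[OF sub]) (auto intro: Ameas)
  also have "\<dots> \<le> (\<Sum>i\<in>UNIV. measure M (A i))"
    by (rule finite_measure_subadditive_finite) (auto intro: Ameas)
  also have "\<dots> \<le> (\<Sum>i\<in>(UNIV::'d set). 2 * exp (- c0 * s))"
    unfolding A_def
    by (rule sum_mono, rule coord_tail[OF P indep distrX _ pq spos]) (use subG in auto)
  also have "\<dots> = 2 * real CARD('d) * exp (- c0 * t / real CARD('d))"
    by (simp add: s_def D_def)
  finally show ?thesis .
qed

lemma split_ivl:
  fixes g :: "nat \<Rightarrow> 'b::comm_monoid_add"
  assumes "a \<le> b" "b \<le> c"
  shows "(\<Sum>j=a+1..c. g j) = (\<Sum>j=a+1..b. g j) + (\<Sum>j=b+1..c. g j)"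
proof -
  have "{a+1..c} = {a+1..b} \<union> {b+1..c}" using assms by auto
  then show ?thesis by (simp add: sum.union_disjoint[symmetric] ivl_disj_int)
qed

lemma loss_formula:
  fixes x :: "nat \<Rightarrow> real^'d"
  assumes "p \<le> r"
  shows "loss_q x p r = (\<Sum>n=p..r. (norm (x n))\<^sup>2) - (norm (\<Sum>n=p..r. x n))\<^sup>2 / real (r + 1 - p)"
proof -
  define S where "S = (\<Sum>n=p..r. x n)"
  define k where "k = real (r + 1 - p)"
  have kpos: "k > 0" using assms by (simp add: k_def)
  define m where "m = (1 / k) *\<^sub>R S"
  have cardI: "card {p..r} = r + 1 - p" by simp
  have "loss_q x p r = (\<Sum>n=p..r. (norm (x n))\<^sup>2 - 2 * inner (x n) m + (norm m)\<^sup>2)"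
    unfolding loss_q_def seg_mean_def k_def[symmetric] S_def[symmetric] m_def[symmetric]
    by (rule sum.cong) (auto simp: power2_norm_eq_inner inner_diff_left inner_diff_right inner_commute)
  also have "\<dots> = (\<Sum>n=p..r. (norm (x n))\<^sup>2) - 2 * inner S m + k * (norm m)\<^sup>2"
    by (simp add: sum.distrib sum_subtractf inner_sum_left S_def k_def sum_distrib_left[symmetric])
  also have "inner S m = (norm S)\<^sup>2 / k" by (simp add: m_def power2_norm_eq_inner)
  also have "k * (norm m)\<^sup>2 = (norm S)\<^sup>2 / k" using kpos
    by (simp add: m_def power2_eq_square field_simps)
  finally show ?thesis by (simp add: S_def k_def)
qed

lemma merge_identity:
  fixes x :: "nat \<Rightarrow> real^'d"
  assumes ab: "a < b" and bc: "b < c"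
  shows "loss_q x (a+1) c - loss_q x (a+1) b - loss_q x (b+1) c
    = (real (b-a) * real (c-b) / (real (b-a) + real (c-b))) *
      (norm ((\<Sum>j=a+1..b. x j) /\<^sub>R real (b-a) - (\<Sum>j=b+1..c. x j) /\<^sub>R real (c-b)))\<^sup>2"
proof -
  define SA where "SA = (\<Sum>j=a+1..b. x j)"
  define SB where "SB = (\<Sum>j=b+1..c. x j)"
  define na where "na = real (b-a)"
  define nb where "nb = real (c-b)"
  have na: "na > 0" and nb: "nb > 0" using assms by (auto simp: na_def nb_def)
  have nab: "real (c + 1 - (a+1)) = na + nb" "real (b + 1 - (a+1)) = na" "real (c + 1 - (b+1)) = nb"
    using assms by (auto simp: na_def nb_def)
  have sq: "(\<Sum>j=a+1..c. (norm (x j))\<^sup>2) = (\<Sum>j=a+1..b. (norm (x j))\<^sup>2) + (\<Sum>j=b+1..c. (norm (x j))\<^sup>2)"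
    by (rule split_ivl) (use assms in auto)
  have sx: "(\<Sum>j=a+1..c. x j) = SA + SB" unfolding SA_def SB_def
    by (rule split_ivl) (use assms in auto)
  have L: "loss_q x (a+1) c - loss_q x (a+1) b - loss_q x (b+1) c
      = (norm SA)\<^sup>2 / na + (norm SB)\<^sup>2 / nb - (norm (SA + SB))\<^sup>2 / (na + nb)"
  proof -
    have l1: "loss_q x (a+1) c = (\<Sum>j=a+1..c. (norm (x j))\<^sup>2) - (norm (SA + SB))\<^sup>2 / (na + nb)"
      by (rule loss_formula[of "a+1" c x, unfolded sx nab(1)]) (use assms in simp)
    have l2: "loss_q x (a+1) b = (\<Sum>j=a+1..b. (norm (x j))\<^sup>2) - (norm SA)\<^sup>2 / na"
      by (rule loss_formula[of "a+1" b x, unfolded SA_def[symmetric] nab(2)]) (use assms in simp)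
    have l3: "loss_q x (b+1) c = (\<Sum>j=b+1..c. (norm (x j))\<^sup>2) - (norm SB)\<^sup>2 / nb"
      by (rule loss_formula[of "b+1" c x, unfolded SB_def[symmetric] nab(3)]) (use assms in simp)
    show ?thesis unfolding l1 l2 l3 sq by simp
  qed
  define \<alpha> where "\<alpha> = (norm SA)\<^sup>2"
  define \<beta> where "\<beta> = (norm SB)\<^sup>2"
  define \<gamma> where "\<gamma> = inner SA SB"
  have e1: "(norm (SA + SB))\<^sup>2 = \<alpha> + 2 * \<gamma> + \<beta>"
    by (simp add: \<alpha>_def \<beta>_def \<gamma>_def power2_norm_eq_inner inner_add_left inner_add_right inner_commute)
  have e2: "(norm (SA /\<^sub>R na - SB /\<^sub>R nb))\<^sup>2 = \<alpha> / na\<^sup>2 - 2 * \<gamma> / (na * nb) + \<beta> / nb\<^sup>2"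
  proof -
    have g: "(norm (u - v))\<^sup>2 = (norm u)\<^sup>2 - 2 * inner u v + (norm v)\<^sup>2" for u v :: "real^'d"
      unfolding power2_norm_eq_inner by (simp add: inner_diff_left inner_diff_right inner_commute)
    show ?thesis unfolding g using na nb
      by (simp add: \<alpha>_def \<beta>_def \<gamma>_def power_divide abs_of_pos power_mult_distrib field_simps)
  qed
  have "\<alpha> / na + \<beta> / nb - (\<alpha> + 2 * \<gamma> + \<beta>) / (na + nb)
      = na * nb / (na + nb) * (\<alpha> / na\<^sup>2 - 2 * \<gamma> / (na * nb) + \<beta> / nb\<^sup>2)"
  proof -
    have s: "na + nb > 0" using na nb by simp
    have "\<alpha> / na + \<beta> / nb - (\<alpha> + 2 * \<gamma> + \<beta>) / (na + nb) = (\<alpha> * nb\<^sup>2 + \<beta> * na\<^sup>2 - 2 * \<gamma> * na * nb) / (na * nb * (na + nb))"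
      using na nb s by (simp add: divide_simps) (simp add: algebra_simps power2_eq_square)
    also have "\<dots> = na * nb / (na + nb) * (\<alpha> / na\<^sup>2 - 2 * \<gamma> / (na * nb) + \<beta> / nb\<^sup>2)"
      using na nb s by (simp add: divide_simps) (simp add: algebra_simps power2_eq_square)
    finally show ?thesis .
  qed
  then show ?thesis unfolding L e1[folded \<alpha>_def] unfolding na_def[symmetric] nb_def[symmetric]
      SA_def[symmetric] SB_def[symmetric] e2 by (simp add: \<alpha>_def \<beta>_def)
qed


lemma valid_mono:
  assumes "valid_part N k l" "i < i'" "i' \<le> k + 1"
  shows "l i < l i'"
  using assms(2,3)
proof (induction i')
  case 0 then show ?case by simp
next
  case (Suc i')
  have st: "l i' < l (Suc i')" using assms(1) Suc.prems unfolding valid_part_def by auto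
  show ?case
  proof (cases "i = i'")
    case True then show ?thesis using st by simp
  next
    case False then have "l i < l i'" using Suc by auto
    then show ?thesis using st by simp
  qed
qed

lemma split4:
  fixes g :: "nat \<Rightarrow> real"
  assumes "1 \<le> j" "j \<le> m"
  shows "(\<Sum>i=1..m+1. g i) = (\<Sum>i\<in>{1..<j}. g i) + g j + g (j+1) + (\<Sum>i=j+2..m+1. g i)"
proof -
  have e: "{1..m+1} = {1..<j} \<union> ({j} \<union> ({j+1} \<union> {j+2..m+1}))" using assms by auto
  show ?thesis unfolding e
    by (subst sum.union_disjoint, simp, simp, force)+ (simp add: add.assoc)
qed

lemma split3:
  fixes g :: "nat \<Rightarrow> real"
  assumes "1 \<le> j" "j \<le> m"
  shows "(\<Sum>i=1..m. g i) = (\<Sum>i\<in>{1..<j}. g i) + g j + (\<Sum>i=j+1..m. g i)"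
proof -
  have e: "{1..m} = {1..<j} \<union> ({j} \<union> {j+1..m})" using assms by auto
  show ?thesis unfolding e
    by (subst sum.union_disjoint, simp, simp, force)+ (simp add: add.assoc)
qed


lemma remove_cp:
  fixes x :: "nat \<Rightarrow> real^'d"
  assumes v: "valid_part N m l" and j: "1 \<le> j" "j \<le> m"
  defines "l' \<equiv> \<lambda>i. if i < j then l i else l (Suc i)"
  shows "valid_part N (m - 1) l'"
    and "seg_cost x (m - 1) l' = seg_cost x m l - loss_q x (l (j - 1) + 1) (l j)
           - loss_q x (l j + 1) (l (j + 1)) + loss_q x (l (j - 1) + 1) (l (j + 1))"
proof -
  have m1: "m - 1 + 1 = m" using j by simp
  show "valid_part N (m - 1) l'"
    unfolding valid_part_def
  proof (intro conjI allI impI)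
    show "l' 0 = 0" using v j by (simp add: l'_def valid_part_def)
    show "l' (m - 1 + 1) = N" using v j by (simp add: l'_def valid_part_def m1)
    fix i assume i: "i \<le> m - 1"
    show "l' i < l' (Suc i)"
    proof (cases "Suc i < j")
      case True
      then show ?thesis using valid_mono[OF v, of i "Suc i"] i j by (simp add: l'_def)
    next
      case False
      show ?thesis
      proof (cases "i < j")
        case True
        then have "l' i = l i" "l' (Suc i) = l (Suc (Suc i))" using False by (auto simp: l'_def)
        moreover have "l i < l (Suc (Suc i))" by (rule valid_mono[OF v]) (use i j False True in auto)
        ultimately show ?thesis by simp
      next
        case f2: False
        then have "l' i = l (Suc i)" "l' (Suc i) = l (Suc (Suc i))" by (auto simp: l'_def)
        moreover have "l (Suc i) < l (Suc (Suc i))" by (rule valid_mono[OF v]) (use i j in auto)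
        ultimately show ?thesis by simp
      qed
    qed
  qed
  define F where "F i = loss_q x (l (i - 1) + 1) (l i)" for i
  define G where "G i = loss_q x (l' (i - 1) + 1) (l' i)" for i
  have c1: "seg_cost x m l = (\<Sum>i\<in>{1..<j}. F i) + F j + F (j+1) + (\<Sum>i=j+2..m+1. F i)"
    unfolding seg_cost_def F_def[symmetric] by (rule split4[OF j])
  have c2: "seg_cost x (m - 1) l' = (\<Sum>i\<in>{1..<j}. G i) + G j + (\<Sum>i=j+1..m. G i)"
    unfolding seg_cost_def G_def[symmetric] m1 by (rule split3[OF j])
  have g1: "(\<Sum>i\<in>{1..<j}. G i) = (\<Sum>i\<in>{1..<j}. F i)"
    by (rule sum.cong) (auto simp: G_def F_def l'_def)
  have g2: "G j = loss_q x (l (j - 1) + 1) (l (j + 1))" using j by (simp add: G_def l'_def)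
  have g3: "(\<Sum>i=j+1..m. G i) = (\<Sum>i=j+2..m+1. F i)"
  proof -
    have "(\<Sum>i=j+1..m. G i) = (\<Sum>i=j+1..m. F (i + 1))"
      by (rule sum.cong) (auto simp: G_def F_def l'_def)
    also have "\<dots> = (\<Sum>i=j+2..m+1. F i)"
      by (rule sum.reindex_bij_witness[of _ "\<lambda>i. i - 1" "\<lambda>i. i + 1"]) auto
    finally show ?thesis .
  qed
  show "seg_cost x (m - 1) l' = seg_cost x m l - loss_q x (l (j - 1) + 1) (l j)
           - loss_q x (l j + 1) (l (j + 1)) + loss_q x (l (j - 1) + 1) (l (j + 1))"
    unfolding c1 c2 g1 g2 g3 by (simp add: F_def)
qed

lemma stop_index_lt:
  assumes "N \<ge> 1"
  shows "stop_index sel Mmax beta N x < N"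
proof (cases "\<exists>k\<le>Mmax. stop_bad sel beta N x k")
  case True
  define k0 where "k0 = (LEAST k. k \<le> Mmax \<and> stop_bad sel beta N x k)"
  have "k0 \<le> N"
  proof (cases "N \<le> Mmax")
    case True
    have "N \<le> Mmax \<and> stop_bad sel beta N x N" using True by (simp add: stop_bad_def)
    then show ?thesis unfolding k0_def by (rule Least_le)
  next
    case False
    from \<open>\<exists>k\<le>Mmax. stop_bad sel beta N x k\<close> obtain k where "k \<le> Mmax \<and> stop_bad sel beta N x k" by blast
    then have "k0 \<le> Mmax" unfolding k0_def by (rule LeastI2) auto
    then show ?thesis using False by simp
  qed
  then show ?thesis using True assms by (simp add: stop_index_def k0_def[symmetric])
next
  case False
  then have "\<not> N \<le> Mmax" by (auto simp: stop_bad_def)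
  then show ?thesis using False unfolding stop_index_def by auto
qed

lemma increase:
  fixes x :: "nat \<Rightarrow> real^'d"
  assumes sel_min: "\<forall>N x k. k < N \<longrightarrow> is_minimizer N x k (sel N x k)"
    and pick_le: "\<forall>N x. pick N x \<le> stop_index sel Mmax beta N x"
    and pick_min: "\<forall>N x. \<forall>k\<le>stop_index sel Mmax beta N x.
                      pen_crit sel f N x (pick N x) \<le> pen_crit sel f N x k"
    and N1: "N \<ge> 1"
    and td: "two_detected (sel N x (pick N x)) (pick N x) a b c"
  shows "a < b \<and> b < c \<and> f N \<le> loss_q x (a+1) c - loss_q x (a+1) b - loss_q x (b+1) c"
proof -
  define m where "m = pick N x"
  define l where "l = sel N x m"
  have mle: "m \<le> stop_index sel Mmax beta N x" unfolding m_def by (rule pick_le[rule_format])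
  have mN: "m < N" using mle stop_index_lt[OF N1, of sel Mmax beta x] by linarith
  have v: "valid_part N m l"
    using sel_min[rule_format, OF mN, of x] unfolding l_def is_minimizer_def by blast
  obtain j where j: "1 \<le> j" "j \<le> m" "l (j - 1) = a" "l j = b" "l (j + 1) = c"
    using td unfolding two_detected_def m_def[symmetric] l_def[symmetric] by blast
  have ab: "a < b" using valid_mono[OF v, of "j - 1" j] j by simp
  have bc: "b < c" using valid_mono[OF v, of j "j + 1"] j by simp
  define l' where "l' = (\<lambda>i. if i < j then l i else l (Suc i))"
  have v': "valid_part N (m - 1) l'" using remove_cp(1)[OF v j(1,2)] unfolding l'_def .
  have sc0: "seg_cost x (m - 1) l' = seg_cost x m l - loss_q x (l (j - 1) + 1) (l j)
           - loss_q x (l j + 1) (l (j + 1)) + loss_q x (l (j - 1) + 1) (l (j + 1))"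
    using remove_cp(2)[OF v j(1,2), of x] unfolding l'_def .
  have sc: "seg_cost x (m - 1) l' = seg_cost x m l - loss_q x (a + 1) b
           - loss_q x (b + 1) c + loss_q x (a + 1) c"
    using sc0 unfolding j(3,4,5) .
  have m1N: "m - 1 < N" using mN by linarith
  have min': "seg_cost x (m - 1) (sel N x (m - 1)) \<le> seg_cost x (m - 1) l'"
    using sel_min[rule_format, OF m1N, of x] v' unfolding is_minimizer_def by blast
  have "m - 1 \<le> stop_index sel Mmax beta N x" using mle by linarith
  then have "pen_crit sel f N x (pick N x) \<le> pen_crit sel f N x (m - 1)"
    by (rule pick_min[rule_format])
  then have "seg_cost x m l + real m * f N \<le> seg_cost x (m - 1) (sel N x (m - 1)) + real (m - 1) * f N"
    unfolding pen_crit_def l_def m_def .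
  moreover have "real m = real (m - 1) + 1" using j by simp
  ultimately have "f N \<le> seg_cost x (m - 1) l' - seg_cost x m l" using min'
    by (simp only: distrib_right mult_1_left)
  then show ?thesis using ab bc sc by linarith
qed

lemma sq4: "(a + b + c + d)\<^sup>2 \<le> 4 * (a\<^sup>2 + b\<^sup>2 + c\<^sup>2 + d\<^sup>2)" for a b c d :: real
proof -
  have "0 \<le> (a-b)\<^sup>2 + (a-c)\<^sup>2 + (a-d)\<^sup>2 + (b-c)\<^sup>2 + (b-d)\<^sup>2 + (c-d)\<^sup>2" by simp
  then show ?thesis by (simp add: power2_eq_square algebra_simps)
qed

lemma term_bound:
  fixes U :: "real^'d"
  assumes "h > 0" "h \<le> A" "(norm U)\<^sup>2 < A * f / 16"
  shows "h * (norm (U /\<^sub>R A))\<^sup>2 < f / 16"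
proof -
  have A: "A > 0" using assms by simp
  have "h * (norm (U /\<^sub>R A))\<^sup>2 = h * (norm U)\<^sup>2 / A\<^sup>2" using A by (simp add: power_mult_distrib field_simps)
  also have "\<dots> \<le> A * (norm U)\<^sup>2 / A\<^sup>2" using assms A
    by (intro divide_right_mono mult_right_mono) auto
  also have "\<dots> = (norm U)\<^sup>2 / A" using A by (simp add: power2_eq_square)
  also have "\<dots> < f / 16" using assms A by (simp add: divide_simps mult.commute)
  finally show ?thesis .
qed

lemma four:
  fixes U1 U2 U3 W :: "real^'d"
  assumes h: "h > 0" "h \<le> A1" "h \<le> A2" "h \<le> A3"
    and u: "(norm U1)\<^sup>2 < A1 * f / 16" "(norm U2)\<^sup>2 < A2 * f / 16" "(norm U3)\<^sup>2 < A3 * f / 16"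
    and w: "h * (norm W)\<^sup>2 \<le> f / 16"
  shows "h * (norm (U1 /\<^sub>R A1 + U2 /\<^sub>R A2 + U3 /\<^sub>R A3 + W))\<^sup>2 < f"
proof -
  define n1 where "n1 = norm (U1 /\<^sub>R A1)"
  define n2 where "n2 = norm (U2 /\<^sub>R A2)"
  define n3 where "n3 = norm (U3 /\<^sub>R A3)"
  define n4 where "n4 = norm W"
  have "norm (U1 /\<^sub>R A1 + U2 /\<^sub>R A2 + U3 /\<^sub>R A3 + W) \<le> n1 + n2 + n3 + n4"
    unfolding n1_def n2_def n3_def n4_def by (intro norm_triangle_le add_mono order_refl)
  then have "(norm (U1 /\<^sub>R A1 + U2 /\<^sub>R A2 + U3 /\<^sub>R A3 + W))\<^sup>2 \<le> (n1 + n2 + n3 + n4)\<^sup>2"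
    by (intro power_mono) auto
  also have "\<dots> \<le> 4 * (n1\<^sup>2 + n2\<^sup>2 + n3\<^sup>2 + n4\<^sup>2)" by (rule sq4)
  finally have "h * (norm (U1 /\<^sub>R A1 + U2 /\<^sub>R A2 + U3 /\<^sub>R A3 + W))\<^sup>2
      \<le> h * (4 * (n1\<^sup>2 + n2\<^sup>2 + n3\<^sup>2 + n4\<^sup>2))"
    using h(1) by (intro mult_left_mono) auto
  also have "\<dots> = 4 * (h * n1\<^sup>2 + h * n2\<^sup>2 + h * n3\<^sup>2 + h * n4\<^sup>2)" by (simp add: algebra_simps)
  also have "\<dots> < 4 * (f/16 + f/16 + f/16 + f/16)"
    using term_bound[OF h(1,2) u(1)] term_bound[OF h(1,3) u(2)] term_bound[OF h(1,4) u(3)] w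
    unfolding n1_def n2_def n3_def n4_def by simp
  finally show ?thesis by simp
qed

lemma alg1:
  fixes SA SB1 SB2 \<mu> \<nu> :: "real^'d" and na b1 n3 f :: real
  assumes pos: "na > 0" "b1 > 0" "n3 > 0"
    and u: "(norm (SA - na *\<^sub>R \<mu>))\<^sup>2 < na * f / 16"
      "(norm (SB1 - b1 *\<^sub>R \<mu>))\<^sup>2 < b1 * f / 16"
      "(norm (SB2 - n3 *\<^sub>R \<nu>))\<^sup>2 < n3 * f / 16"
    and w: "16 * n3 * (norm (\<mu> - \<nu>))\<^sup>2 \<le> f"
  shows "(na * (b1 + n3) / (na + (b1 + n3))) * (norm (SA /\<^sub>R na - (SB1 + SB2) /\<^sub>R (b1 + n3)))\<^sup>2 < f"
proof -
  define nb where "nb = b1 + n3"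
  define h where "h = na * nb / (na + nb)"
  have nb: "nb > 0" using pos by (simp add: nb_def)
  have hpos: "h > 0" using pos nb by (simp add: h_def)
  have hna: "h \<le> na" using pos nb by (simp add: h_def divide_simps)
  have hnb: "h \<le> nb" using pos nb by (simp add: h_def divide_simps)
  define W where "W = (n3 / nb) *\<^sub>R (\<mu> - \<nu>)"
  have id: "SA /\<^sub>R na - (SB1 + SB2) /\<^sub>R nb = (SA - na *\<^sub>R \<mu>) /\<^sub>R na + (- (SB1 - b1 *\<^sub>R \<mu>)) /\<^sub>R nb
      + (- (SB2 - n3 *\<^sub>R \<nu>)) /\<^sub>R nb + W"
  proof -
    have b1e: "b1 = nb - n3" by (simp add: nb_def)
    show ?thesis using pos nb unfolding W_def b1e by (simp add: vec_eq_iff field_simps)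
  qed
  have wb: "h * (norm W)\<^sup>2 \<le> f / 16"
  proof -
    have "h * (norm W)\<^sup>2 = h * (n3 / nb)\<^sup>2 * (norm (\<mu> - \<nu>))\<^sup>2"
      using pos nb by (simp add: W_def power_mult_distrib power_divide)
    also have "\<dots> \<le> nb * (n3 / nb)\<^sup>2 * (norm (\<mu> - \<nu>))\<^sup>2"
      using hnb by (intro mult_right_mono) auto
    also have "nb * (n3 / nb)\<^sup>2 = n3 * (n3 / nb)" using nb by (simp add: power2_eq_square)
    also have "n3 * (n3 / nb) * (norm (\<mu> - \<nu>))\<^sup>2 \<le> n3 * 1 * (norm (\<mu> - \<nu>))\<^sup>2"
      using pos nb by (intro mult_right_mono mult_left_mono) (auto simp: nb_def)
    also have "\<dots> \<le> f / 16" using w by simp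
    finally show ?thesis .
  qed
  have "h * (norm ((SA - na *\<^sub>R \<mu>) /\<^sub>R na + (- (SB1 - b1 *\<^sub>R \<mu>)) /\<^sub>R nb
      + (- (SB2 - n3 *\<^sub>R \<nu>)) /\<^sub>R nb + W))\<^sup>2 < f"
  proof (rule four[OF hpos hna hnb hnb u(1) _ _ wb])
    have "0 \<le> 16 * n3 * (norm (\<mu> - \<nu>))\<^sup>2" using pos by simp
    then have f0: "f \<ge> 0" using w by linarith
    have l1: "b1 * f / 16 \<le> nb * f / 16" using f0 pos
      by (intro divide_right_mono mult_right_mono) (auto simp: nb_def)
    have l2: "n3 * f / 16 \<le> nb * f / 16" using f0 pos
      by (intro divide_right_mono mult_right_mono) (auto simp: nb_def)
    show "(norm (- (SB1 - b1 *\<^sub>R \<mu>)))\<^sup>2 < nb * f / 16"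
      using u(2) l1 by (simp only: norm_minus_cancel)
    show "(norm (- (SB2 - n3 *\<^sub>R \<nu>)))\<^sup>2 < nb * f / 16"
      using u(3) l2 by (simp only: norm_minus_cancel)
  qed
  then have "h * (norm (SA /\<^sub>R na - (SB1 + SB2) /\<^sub>R nb))\<^sup>2 < f" unfolding id .
  then show ?thesis by (simp add: h_def nb_def)
qed

lemma alg2:
  fixes SA1 SA2 SB \<mu> \<nu> :: "real^'d" and a1 a2 nb f :: real
  assumes pos: "a1 > 0" "a2 > 0" "nb > 0"
    and u: "(norm (SA1 - a1 *\<^sub>R \<nu>))\<^sup>2 < a1 * f / 16"
      "(norm (SA2 - a2 *\<^sub>R \<mu>))\<^sup>2 < a2 * f / 16"
      "(norm (SB - nb *\<^sub>R \<mu>))\<^sup>2 < nb * f / 16"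
    and w: "16 * a1 * (norm (\<nu> - \<mu>))\<^sup>2 \<le> f"
  shows "((a1 + a2) * nb / ((a1 + a2) + nb)) * (norm ((SA1 + SA2) /\<^sub>R (a1 + a2) - SB /\<^sub>R nb))\<^sup>2 < f"
proof -
  define na where "na = a1 + a2"
  define h where "h = na * nb / (na + nb)"
  have na: "na > 0" using pos by (simp add: na_def)
  have hpos: "h > 0" using pos na by (simp add: h_def)
  have hna: "h \<le> na" using pos na by (simp add: h_def divide_simps)
  have hnb: "h \<le> nb" using pos na by (simp add: h_def divide_simps)
  define W where "W = (a1 / na) *\<^sub>R (\<nu> - \<mu>)"
  have id: "(SA1 + SA2) /\<^sub>R na - SB /\<^sub>R nb = (SA1 - a1 *\<^sub>R \<nu>) /\<^sub>R na + (SA2 - a2 *\<^sub>R \<mu>) /\<^sub>R na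
      + (- (SB - nb *\<^sub>R \<mu>)) /\<^sub>R nb + W"
  proof -
    have a2e: "a2 = na - a1" by (simp add: na_def)
    show ?thesis using pos na unfolding W_def a2e by (simp add: vec_eq_iff field_simps)
  qed
  have wb: "h * (norm W)\<^sup>2 \<le> f / 16"
  proof -
    have "h * (norm W)\<^sup>2 = h * (a1 / na)\<^sup>2 * (norm (\<nu> - \<mu>))\<^sup>2"
      using pos na by (simp add: W_def power_mult_distrib power_divide)
    also have "\<dots> \<le> na * (a1 / na)\<^sup>2 * (norm (\<nu> - \<mu>))\<^sup>2"
      using hna by (intro mult_right_mono) auto
    also have "na * (a1 / na)\<^sup>2 = a1 * (a1 / na)" using na by (simp add: power2_eq_square)
    also have "a1 * (a1 / na) * (norm (\<nu> - \<mu>))\<^sup>2 \<le> a1 * 1 * (norm (\<nu> - \<mu>))\<^sup>2"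
      using pos na by (intro mult_right_mono mult_left_mono) (auto simp: na_def)
    also have "\<dots> \<le> f / 16" using w by simp
    finally show ?thesis .
  qed
  have "0 \<le> 16 * a1 * (norm (\<nu> - \<mu>))\<^sup>2" using pos by simp
  then have f0: "f \<ge> 0" using w by linarith
  have l1: "a1 * f / 16 \<le> na * f / 16" using f0 pos
    by (intro divide_right_mono mult_right_mono) (auto simp: na_def)
  have l2: "a2 * f / 16 \<le> na * f / 16" using f0 pos
    by (intro divide_right_mono mult_right_mono) (auto simp: na_def)
  have "h * (norm ((SA1 - a1 *\<^sub>R \<nu>) /\<^sub>R na + (SA2 - a2 *\<^sub>R \<mu>) /\<^sub>R na
      + (- (SB - nb *\<^sub>R \<mu>)) /\<^sub>R nb + W))\<^sup>2 < f"
  proof (rule four[OF hpos hna hna hnb _ _ _ wb])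
    show "(norm (SA1 - a1 *\<^sub>R \<nu>))\<^sup>2 < na * f / 16" using u(1) l1 by simp
    show "(norm (SA2 - a2 *\<^sub>R \<mu>))\<^sup>2 < na * f / 16" using u(2) l2 by simp
    show "(norm (- (SB - nb *\<^sub>R \<mu>)))\<^sup>2 < nb * f / 16"
      using u(3) by (simp only: norm_minus_cancel)
  qed
  then have "h * (norm ((SA1 + SA2) /\<^sub>R na - SB /\<^sub>R nb))\<^sup>2 < f" unfolding id .
  then show ?thesis by (simp add: h_def na_def)
qed
lemma real_bound:
  fixes N :: nat and e K :: real
  assumes N: "N \<ge> 2" and e: "e > 4" and K: "K \<ge> 0"
  shows "K * (real N + 1)\<^sup>2 * exp (- (e * ln (real N))) \<le> 4 * K * inverse (real N ^ 2)"
proof -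
  have N1: "real N \<ge> 1" using N by simp
  have "exp (- (e * ln (real N))) = real N powr (- e)"
    using N by (simp add: powr_def)
  also have "\<dots> \<le> real N powr (- 4)" using N1 e by (intro powr_mono) auto
  also have "\<dots> = inverse (real N ^ 4)" using N by (simp add: powr_minus powr_realpow)
  finally have ex: "exp (- (e * ln (real N))) \<le> inverse (real N ^ 4)" .
  have sq: "(real N + 1)\<^sup>2 \<le> 4 * (real N)\<^sup>2" proof -
    have "real N * 1 \<le> real N * real N" using N1 by (intro mult_left_mono) auto
    moreover have "(real N + 1)\<^sup>2 = real N * real N + 2 * real N + 1" by (simp add: power2_eq_square algebra_simps)
    moreover have "4 * (real N)\<^sup>2 = 4 * (real N * real N)" by (simp add: power2_eq_square)
    ultimately show ?thesis using N1 by linarith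
  qed
  have "K * (real N + 1)\<^sup>2 * exp (- (e * ln (real N))) \<le> K * (4 * (real N)\<^sup>2) * inverse (real N ^ 4)"
    using ex sq K by (intro mult_mono) auto
  also have "\<dots> = 4 * K * inverse (real N ^ 2)" using N by (simp add: field_simps power2_eq_square power4_eq_xxxx)
  finally show ?thesis .
qed


theorem lemma5:
  fixes M :: "'a measure"
    and X :: "nat \<Rightarrow> nat \<Rightarrow> 'a \<Rightarrow> real^'d"
    and M0 N0 :: nat
    and L :: "nat \<Rightarrow> nat \<Rightarrow> nat"
    and G :: "nat \<Rightarrow> (real^'d) measure"
    and \<mu> :: "nat \<Rightarrow> real^'d"
    and c0 C :: real
    and Mmax :: nat
    and f :: "nat \<Rightarrow> real"
    and beta :: "nat \<Rightarrow> nat"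
    and sel :: "nat \<Rightarrow> (nat \<Rightarrow> real^'d) \<Rightarrow> nat \<Rightarrow> nat \<Rightarrow> nat"
    and pick :: "nat \<Rightarrow> (nat \<Rightarrow> real^'d) \<Rightarrow> nat"
  assumes P: "prob_space M"
    and M0_pos: "M0 > 0"
    (* model (M.2), for all sample sizes N \<ge> N0 *)
    and L0: "\<forall>N\<ge>N0. L N 0 = 0"
    and Lend: "\<forall>N\<ge>N0. L N (M0 + 1) = N"
    and Lmono: "\<forall>N\<ge>N0. \<forall>k\<le>M0. L N k < L N (Suc k)"
    and Nk_inf: "\<forall>k\<in>{1..M0+1}. filterlim (\<lambda>N. L N k - L N (k - 1)) at_top sequentially"
    and indep: "\<forall>N\<ge>N0. prob_space.indep_vars M (\<lambda>_. borel) (X N) {1..N}"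
    and distr_X: "\<forall>N\<ge>N0. \<forall>k\<in>{1..M0+1}. \<forall>n\<in>{L N (k - 1) + 1 .. L N k}.
                    distr M borel (X N n) = G k"
    and mean: "\<forall>k\<in>{1..M0+1}. integrable (G k) (\<lambda>x. x) \<and> \<mu> k = (\<integral>x. x \<partial>G k)"
    and cov: "\<forall>k\<in>{1..M0+1}. integrable (G k) (\<lambda>x. (norm x)\<^sup>2)"
    and mean_change: "\<forall>k\<in>{1..M0}. \<mu> k \<noteq> \<mu> (k + 1)"
    (* (A.4) *)
    and c0_pos: "c0 > 0"
    and subG: "\<forall>k\<in>{1..M0+1}. \<forall>i. \<forall>n\<ge>1. \<forall>a>0.
        measure (PiM {1..n} (\<lambda>_. distr (G k) borel (\<lambda>x. x $ i)))
          {z \<in> space (PiM {1..n} (\<lambda>_. distr (G k) borel (\<lambda>x. x $ i))).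
             \<bar>(\<Sum>j=1..n. z j) / real n - \<mu> k $ i\<bar> \<ge> a}
        \<le> 2 * exp (- c0 * a\<^sup>2 * real n)"
    (* constant C *)
    and C_gt: "C > 64 * real CARD('d) / c0"
    (* Algorithm 2 *)
    and Mmax_pos: "Mmax \<ge> 1"
    and f_pos: "\<forall>N\<ge>N0. f N > 0"
    and sel_min: "\<forall>N x k. k < N \<longrightarrow> is_minimizer N x k (sel N x k)"
    and pick_le: "\<forall>N x. pick N x \<le> stop_index sel Mmax beta N x"
    and pick_min: "\<forall>N x. \<forall>k\<le>stop_index sel Mmax beta N x.
                      pen_crit sel f N x (pick N x) \<le> pen_crit sel f N x k"
  shows
    "(\<forall>k (\<eta>::nat \<Rightarrow> nat). k \<in> {1..M0} \<and>
        (\<forall>N\<ge>N0. 1 \<le> \<eta> N \<and> \<eta> N \<le> L N (k + 1) - L N k) \<and>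
        (\<forall>N\<ge>N0. f N \<ge> max (16 * (norm (\<mu> k - \<mu> (k + 1)))\<^sup>2 * real (\<eta> N)) (C * ln (real N)))
      \<longrightarrow> (AE \<omega> in M. \<forall>\<^sub>F N in sequentially. \<not> (\<exists>n1 n2 n3.
             n1 < n2 \<and> n2 < L N k - L N (k - 1) \<and> 1 \<le> n3 \<and> n3 \<le> \<eta> N \<and>
             two_detected (sel N (\<lambda>n. X N n \<omega>) (pick N (\<lambda>n. X N n \<omega>))) (pick N (\<lambda>n. X N n \<omega>))
               (L N (k - 1) + n1) (L N (k - 1) + n2) (L N k + n3))))
   \<and> (\<forall>k (\<eta>::nat \<Rightarrow> nat). k \<in> {2..M0+1} \<and>
        (\<forall>N\<ge>N0. 1 \<le> \<eta> N \<and> \<eta> N \<le> L N (k - 1) - L N (k - 2)) \<and>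
        (\<forall>N\<ge>N0. f N \<ge> max (16 * (norm (\<mu> (k - 1) - \<mu> k))\<^sup>2 * real (\<eta> N)) (C * ln (real N)))
      \<longrightarrow> (AE \<omega> in M. \<forall>\<^sub>F N in sequentially. \<not> (\<exists>n1 n2 n3.
             1 \<le> n1 \<and> n1 < n2 \<and> n2 \<le> L N k - L N (k - 1) \<and> 1 \<le> n3 \<and> n3 \<le> \<eta> N \<and>
             two_detected (sel N (\<lambda>n. X N n \<omega>) (pick N (\<lambda>n. X N n \<omega>))) (pick N (\<lambda>n. X N n \<omega>))
               (L N (k - 1) - n3) (L N (k - 1) + n1) (L N (k - 1) + n2))))"
proof -
  interpret prob_space M by (rule P)
  define D where "D = real CARD('d)"
  have Dpos: "D > 0" by (simp add: D_def)
  have c0C: "c0 * C > 64 * D" using C_gt c0_pos unfolding D_def by (simp add: field_simps)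
  define e where "e = c0 * C / (16 * D)"
  have e4: "e > 4" using c0C Dpos by (simp add: e_def field_simps)
  have Cpos: "C > 0" using c0C Dpos c0_pos by (smt (verit) mult_nonneg_nonpos)
  have Lvalid: "valid_part N M0 (L N)" if "N \<ge> N0" for N
    unfolding valid_part_def using L0 Lend Lmono that by auto
  have Lle: "L N i \<le> L N i'" if "N \<ge> N0" "i \<le> i'" "i' \<le> M0 + 1" for N i i'
    using valid_mono[OF Lvalid[OF that(1)], of i i'] that by (cases "i = i'") auto
  have LN: "L N i \<le> N" if "N \<ge> N0" "i \<le> M0 + 1" for N i
    using Lle[OF that(1) that(2) order_refl] Lend that(1) by simp
  define ev where "ev N k' p q = (if L N (k' - 1) \<le> p \<and> p < q \<and> q \<le> L N k' then
      {\<omega>\<in>space M. (norm (\<Sum>j\<in>{p<..q}. X N j \<omega> - \<mu> k'))\<^sup>2 \<ge> real (q-p) * (C * ln (real N) / 16)}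
      else {})" for N k' p q
  define Ix where "Ix N = {1..M0+1} \<times> {..N} \<times> {..(N::nat)}" for N
  define bad where "bad N = (if max N0 2 \<le> N then (\<Union>(k',p,q)\<in>Ix N. ev N k' p q) else {})" for N
  have ev_sets: "ev N k' p q \<in> sets M" if N: "N \<ge> N0" and k': "k' \<in> {1..M0+1}" for N k' p q
  proof (cases "L N (k' - 1) \<le> p \<and> p < q \<and> q \<le> L N k'")
    case True
    then have qN: "q \<le> N" using LN[OF N, of k'] k' by auto
    have meas: "X N j \<in> borel_measurable M" if "j \<in> {p<..q}" for j
      using indep N that qN unfolding indep_vars_def by auto
    have [measurable]: "(\<lambda>\<omega>. \<Sum>j\<in>{p<..q}. X N j \<omega> - \<mu> k') \<in> borel_measurable M"
      by (rule borel_measurable_sum) (use meas in measurable)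
    show ?thesis using True unfolding ev_def by simp
  next
    case False then have "ev N k' p q = {}" unfolding ev_def by (simp only: if_False)
    then show ?thesis by simp
  qed
  have ev_bound: "measure M (ev N k' p q) \<le> 2 * D * exp (- c0 * (C * ln (real N) / 16) / D)"
    if N: "max N0 2 \<le> N" and k': "k' \<in> {1..M0+1}" for N k' p q
  proof (cases "L N (k' - 1) \<le> p \<and> p < q \<and> q \<le> L N k'")
    case True
    have NN0: "N \<ge> N0" using N by simp
    then have qN: "q \<le> N" using LN[OF NN0, of k'] k' True by auto
    have tpos: "C * ln (real N) / 16 > 0" using N Cpos by simp
    have dX: "\<forall>n\<in>{p<..q}. distr M borel (X N n) = G k'"
      using distr_X NN0 k' True by auto
    have sG: "\<forall>i. \<forall>n\<ge>1. \<forall>a>0.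
        measure (PiM {1..n} (\<lambda>_. distr (G k') borel (\<lambda>x. x $ i)))
          {z \<in> space (PiM {1..n} (\<lambda>_. distr (G k') borel (\<lambda>x. x $ i))).
             \<bar>(\<Sum>j=1..n. z j) / real n - \<mu> k' $ i\<bar> \<ge> a}
        \<le> 2 * exp (- c0 * a\<^sup>2 * real n)"
      using subG k' by blast
    have "measure M (ev N k' p q) =
      measure M {\<omega>\<in>space M. (norm (\<Sum>j\<in>{p<..q}. X N j \<omega> - \<mu> k'))\<^sup>2 \<ge> real (q-p) * (C * ln (real N) / 16)}"
      using True by (simp add: ev_def)
    also have "\<dots> \<le> 2 * real CARD('d) * exp (- c0 * (C * ln (real N) / 16) / real CARD('d))"
      by (rule vec_tail[OF P indep[rule_format, OF NN0] dX sG _ qN tpos]) (use True in simp)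
    finally show ?thesis by (simp add: D_def)
  next
    case False then have "ev N k' p q = {}" unfolding ev_def by (simp only: if_False)
    then show ?thesis using Dpos by simp
  qed
  have bad_sets: "bad N \<in> sets M" for N
  proof (cases "max N0 2 \<le> N")
    case True
    have "(\<Union>(k',p,q)\<in>Ix N. ev N k' p q) \<in> sets M"
      by (rule sets.finite_UN) (use True in \<open>auto simp: Ix_def intro!: ev_sets\<close>)
    then show ?thesis using True by (simp add: bad_def)
  next
    case False then have "bad N = {}" unfolding bad_def by (simp only: if_False)
    then show ?thesis by simp
  qed
  define K where "K = real (M0 + 1) * (2 * D)"
  have Kpos: "K \<ge> 0" using Dpos by (simp add: K_def)
  have bad_bound: "measure M (bad N) \<le> 4 * K * inverse (real N ^ 2)" for N
  proof (cases "max N0 2 \<le> N")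
    case True
    have "measure M (bad N) = measure M (\<Union>z\<in>Ix N. (case z of (k',p,q) \<Rightarrow> ev N k' p q))"
      using True by (simp add: bad_def)
    also have "\<dots> \<le> (\<Sum>z\<in>Ix N. measure M (case z of (k',p,q) \<Rightarrow> ev N k' p q))"
      by (rule finite_measure_subadditive_finite) (use True in \<open>auto simp: Ix_def intro!: ev_sets\<close>)
    also have "\<dots> \<le> of_nat (card (Ix N)) * (2 * D * exp (- c0 * (C * ln (real N) / 16) / D))"
    proof (rule sum_bounded_above)
      fix z assume "z \<in> Ix N"
      then obtain k' p q where z: "z = (k', p, q)" and k': "k' \<in> {1..M0+1}" by (auto simp: Ix_def)
      show "measure M (case z of (k',p,q) \<Rightarrow> ev N k' p q) \<le> 2 * D * exp (- c0 * (C * ln (real N) / 16) / D)"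
        unfolding z using ev_bound[OF True k', of p q] by simp
    qed
    also have "of_nat (card (Ix N)) = real (M0 + 1) * (real N + 1)\<^sup>2"
      by (simp add: Ix_def card_cartesian_product power2_eq_square) (simp add: algebra_simps)
    also have "- c0 * (C * ln (real N) / 16) / D = - (e * ln (real N))"
      using Dpos by (simp add: e_def field_simps)
    also have "real (M0 + 1) * (real N + 1)\<^sup>2 * (2 * D * exp (- (e * ln (real N))))
        = K * (real N + 1)\<^sup>2 * exp (- (e * ln (real N)))" by (simp add: K_def algebra_simps)
    also have "\<dots> \<le> 4 * K * inverse (real N ^ 2)"
      by (rule real_bound) (use True e4 Kpos in auto)
    finally show ?thesis .
  next
    case False then have "bad N = {}" unfolding bad_def by (simp only: if_False)
    then show ?thesis using Kpos by simp
  qed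
  have summ: "summable (\<lambda>N. measure M (bad N))"
  proof (rule summable_comparison_test'[where N=0])
    show "summable (\<lambda>N. 4 * K * inverse (real N ^ 2))"
      by (rule summable_mult) (rule inverse_power_summable, simp)
    show "norm (measure M (bad N)) \<le> 4 * K * inverse (real N ^ 2)" for N
      using bad_bound[of N] by simp
  qed
  have BC: "AE \<omega> in M. eventually (\<lambda>N. \<omega> \<in> space M - bad N) sequentially"
    by (rule borel_cantelli_AE1[OF bad_sets _ summ]) (simp add: emeasure_eq_measure)
  have good: "(norm ((\<Sum>j=p+1..q. X N j \<omega>) - real (q - p) *\<^sub>R \<mu> k'))\<^sup>2 < real (q - p) * f N / 16"
    if N: "max N0 2 \<le> N" and w: "\<omega> \<in> space M" "\<omega> \<notin> bad N" and k': "k' \<in> {1..M0+1}"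
      and pq: "L N (k' - 1) \<le> p" "p < q" "q \<le> L N k'" and Cf: "C * ln (real N) \<le> f N"
    for N \<omega> k' p q
  proof -
    have NN0: "N \<ge> N0" using N by simp
    have qN: "q \<le> N" using LN[OF NN0, of k'] k' pq by auto
    have "(k', p, q) \<in> Ix N" using k' qN pq by (auto simp: Ix_def)
    then have "\<omega> \<notin> ev N k' p q" using w N by (auto simp: bad_def)
    then have lt: "(norm (\<Sum>j\<in>{p<..q}. X N j \<omega> - \<mu> k'))\<^sup>2 < real (q-p) * (C * ln (real N) / 16)"
      using pq w by (auto simp: ev_def not_le)
    have "(\<Sum>j\<in>{p<..q}. X N j \<omega> - \<mu> k') = (\<Sum>j=p+1..q. X N j \<omega>) - real (q - p) *\<^sub>R \<mu> k'"
      by (simp add: sum_subtractf atLeastSucAtMost_greaterThanAtMost sum_constant_scaleR del: sum_constant)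
    moreover have "real (q-p) * (C * ln (real N) / 16) \<le> real (q - p) * f N / 16"
      using Cf by (simp add: mult_left_mono divide_right_mono)
    ultimately show ?thesis using lt by simp
  qed
  show ?thesis
  proof (rule conjI)
    show "\<forall>k (\<eta>::nat \<Rightarrow> nat). k \<in> {1..M0} \<and>
        (\<forall>N\<ge>N0. 1 \<le> \<eta> N \<and> \<eta> N \<le> L N (k + 1) - L N k) \<and>
        (\<forall>N\<ge>N0. f N \<ge> max (16 * (norm (\<mu> k - \<mu> (k + 1)))\<^sup>2 * real (\<eta> N)) (C * ln (real N)))
      \<longrightarrow> (AE \<omega> in M. \<forall>\<^sub>F N in sequentially. \<not> (\<exists>n1 n2 n3.
             n1 < n2 \<and> n2 < L N k - L N (k - 1) \<and> 1 \<le> n3 \<and> n3 \<le> \<eta> N \<and>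
             two_detected (sel N (\<lambda>n. X N n \<omega>) (pick N (\<lambda>n. X N n \<omega>))) (pick N (\<lambda>n. X N n \<omega>))
               (L N (k - 1) + n1) (L N (k - 1) + n2) (L N k + n3)))"
    proof (intro allI impI)
      fix k and \<eta> :: "nat \<Rightarrow> nat"
      assume A: "k \<in> {1..M0} \<and>
        (\<forall>N\<ge>N0. 1 \<le> \<eta> N \<and> \<eta> N \<le> L N (k + 1) - L N k) \<and>
        (\<forall>N\<ge>N0. f N \<ge> max (16 * (norm (\<mu> k - \<mu> (k + 1)))\<^sup>2 * real (\<eta> N)) (C * ln (real N)))"
      have "AE \<omega> in M. eventually (\<lambda>N. \<omega> \<in> space M - bad N) sequentially \<longrightarrow>
          (\<forall>\<^sub>F N in sequentially. \<not> (\<exists>n1 n2 n3.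
             n1 < n2 \<and> n2 < L N k - L N (k - 1) \<and> 1 \<le> n3 \<and> n3 \<le> \<eta> N \<and>
             two_detected (sel N (\<lambda>n. X N n \<omega>) (pick N (\<lambda>n. X N n \<omega>))) (pick N (\<lambda>n. X N n \<omega>))
               (L N (k - 1) + n1) (L N (k - 1) + n2) (L N k + n3)))"
      proof (rule AE_I2, rule impI)
        fix \<omega> assume w: "\<omega> \<in> space M" and evt: "eventually (\<lambda>N. \<omega> \<in> space M - bad N) sequentially"
        have "\<forall>\<^sub>F N in sequentially. (\<omega> \<in> space M - bad N) \<and> max N0 2 \<le> N"
          using evt eventually_ge_at_top by (rule eventually_conj)
        then show "\<forall>\<^sub>F N in sequentially. \<not> (\<exists>n1 n2 n3.
             n1 < n2 \<and> n2 < L N k - L N (k - 1) \<and> 1 \<le> n3 \<and> n3 \<le> \<eta> N \<and>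
             two_detected (sel N (\<lambda>n. X N n \<omega>) (pick N (\<lambda>n. X N n \<omega>))) (pick N (\<lambda>n. X N n \<omega>))
               (L N (k - 1) + n1) (L N (k - 1) + n2) (L N k + n3))"
        proof (rule eventually_mono, safe)
          fix N n1 n2 n3
          assume wN: "\<omega> \<notin> bad N" and N: "max N0 2 \<le> N"
            and n: "n1 < n2" "n2 < L N k - L N (k - 1)" "1 \<le> n3" "n3 \<le> \<eta> N"
            and td: "two_detected (sel N (\<lambda>n. X N n \<omega>) (pick N (\<lambda>n. X N n \<omega>))) (pick N (\<lambda>n. X N n \<omega>))
               (L N (k - 1) + n1) (L N (k - 1) + n2) (L N k + n3)"
          define x where "x = (\<lambda>n. X N n \<omega>)"
          define a where "a = L N (k - 1) + n1"
          define b where "b = L N (k - 1) + n2"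
          define e' where "e' = L N k"
          define c where "c = L N k + n3"
          have NN0: "N \<ge> N0" using N by simp
          have k: "k \<in> {1..M0}" using A by simp
          have eta: "\<eta> N \<le> L N (k + 1) - L N k" using A NN0 by simp
          have fN: "f N \<ge> 16 * (norm (\<mu> k - \<mu> (k + 1)))\<^sup>2 * real (\<eta> N)" "f N \<ge> C * ln (real N)"
            using A NN0 by auto
          have N1: "N \<ge> 1" using N by simp
          have inc: "a < b \<and> b < c \<and> f N \<le> loss_q x (a+1) c - loss_q x (a+1) b - loss_q x (b+1) c"
            by (rule increase[OF sel_min pick_le pick_min N1]) (use td in \<open>simp add: x_def a_def b_def c_def\<close>)
          have ab: "a < b" and be: "b < e'" and ec: "e' < c"
            using n by (auto simp: a_def b_def e'_def c_def)
          have ck: "c \<le> L N (k + 1)" using n eta by (simp add: c_def)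
          have Lk1: "L N (k - 1) \<le> a" by (simp add: a_def)
          have k1: "k \<in> {1..M0+1}" "k + 1 \<in> {1..M0+1}" using k by auto
          have g1: "(norm ((\<Sum>j=a+1..b. x j) - real (b - a) *\<^sub>R \<mu> k))\<^sup>2 < real (b - a) * f N / 16"
            unfolding x_def by (rule good[OF N w wN k1(1) Lk1 ab _ fN(2)]) (use be in \<open>simp add: e'_def\<close>)
          have g2: "(norm ((\<Sum>j=b+1..e'. x j) - real (e' - b) *\<^sub>R \<mu> k))\<^sup>2 < real (e' - b) * f N / 16"
            unfolding x_def by (rule good[OF N w wN k1(1) _ be _ fN(2)]) (use ab in \<open>simp_all add: a_def b_def e'_def\<close>)
          have g3: "(norm ((\<Sum>j=e'+1..c. x j) - real (c - e') *\<^sub>R \<mu> (k + 1)))\<^sup>2 < real (c - e') * f N / 16"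
            unfolding x_def by (rule good[OF N w wN k1(2) _ ec ck fN(2)]) (simp add: e'_def)
          have w3: "16 * real (c - e') * (norm (\<mu> k - \<mu> (k + 1)))\<^sup>2 \<le> f N"
          proof -
            have "real (c - e') \<le> real (\<eta> N)" using n by (simp add: c_def e'_def)
            then have "real (c - e') * (16 * (norm (\<mu> k - \<mu> (k + 1)))\<^sup>2) \<le> real (\<eta> N) * (16 * (norm (\<mu> k - \<mu> (k + 1)))\<^sup>2)"
              by (rule mult_right_mono) simp
            then have "16 * real (c - e') * (norm (\<mu> k - \<mu> (k + 1)))\<^sup>2 \<le> 16 * (norm (\<mu> k - \<mu> (k + 1)))\<^sup>2 * real (\<eta> N)"
              by (simp only: mult.commute mult.left_commute)
            then show ?thesis using fN(1) by linarith
          qed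
          have lt: "(real (b - a) * (real (e' - b) + real (c - e')) / (real (b - a) + (real (e' - b) + real (c - e')))) *
              (norm ((\<Sum>j=a+1..b. x j) /\<^sub>R real (b - a) - ((\<Sum>j=b+1..e'. x j) + (\<Sum>j=e'+1..c. x j)) /\<^sub>R (real (e' - b) + real (c - e'))))\<^sup>2 < f N"
            by (rule alg1[OF _ _ _ g1 g2 g3 w3]) (use ab be ec in auto)
          have sp: "(\<Sum>j=b+1..c. x j) = (\<Sum>j=b+1..e'. x j) + (\<Sum>j=e'+1..c. x j)"
            by (rule split_ivl) (use be ec in auto)
          have rc: "real (c - b) = real (e' - b) + real (c - e')" using be ec by simp
          have "loss_q x (a+1) c - loss_q x (a+1) b - loss_q x (b+1) c < f N"
            unfolding merge_identity[OF ab order.strict_trans[OF be ec]] sp rc using lt .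
          then show False using inc by simp
        qed
      qed
      from AE_mp[OF BC this] show "AE \<omega> in M. \<forall>\<^sub>F N in sequentially. \<not> (\<exists>n1 n2 n3.
             n1 < n2 \<and> n2 < L N k - L N (k - 1) \<and> 1 \<le> n3 \<and> n3 \<le> \<eta> N \<and>
             two_detected (sel N (\<lambda>n. X N n \<omega>) (pick N (\<lambda>n. X N n \<omega>))) (pick N (\<lambda>n. X N n \<omega>))
               (L N (k - 1) + n1) (L N (k - 1) + n2) (L N k + n3))" .
    qed
  next
    show "\<forall>k (\<eta>::nat \<Rightarrow> nat). k \<in> {2..M0+1} \<and>
        (\<forall>N\<ge>N0. 1 \<le> \<eta> N \<and> \<eta> N \<le> L N (k - 1) - L N (k - 2)) \<and>
        (\<forall>N\<ge>N0. f N \<ge> max (16 * (norm (\<mu> (k - 1) - \<mu> k))\<^sup>2 * real (\<eta> N)) (C * ln (real N)))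
      \<longrightarrow> (AE \<omega> in M. \<forall>\<^sub>F N in sequentially. \<not> (\<exists>n1 n2 n3.
             1 \<le> n1 \<and> n1 < n2 \<and> n2 \<le> L N k - L N (k - 1) \<and> 1 \<le> n3 \<and> n3 \<le> \<eta> N \<and>
             two_detected (sel N (\<lambda>n. X N n \<omega>) (pick N (\<lambda>n. X N n \<omega>))) (pick N (\<lambda>n. X N n \<omega>))
               (L N (k - 1) - n3) (L N (k - 1) + n1) (L N (k - 1) + n2)))"
    proof (intro allI impI)
      fix k and \<eta> :: "nat \<Rightarrow> nat"
      assume A: "k \<in> {2..M0+1} \<and>
        (\<forall>N\<ge>N0. 1 \<le> \<eta> N \<and> \<eta> N \<le> L N (k - 1) - L N (k - 2)) \<and>
        (\<forall>N\<ge>N0. f N \<ge> max (16 * (norm (\<mu> (k - 1) - \<mu> k))\<^sup>2 * real (\<eta> N)) (C * ln (real N)))"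
      have "AE \<omega> in M. eventually (\<lambda>N. \<omega> \<in> space M - bad N) sequentially \<longrightarrow>
          (\<forall>\<^sub>F N in sequentially. \<not> (\<exists>n1 n2 n3.
             1 \<le> n1 \<and> n1 < n2 \<and> n2 \<le> L N k - L N (k - 1) \<and> 1 \<le> n3 \<and> n3 \<le> \<eta> N \<and>
             two_detected (sel N (\<lambda>n. X N n \<omega>) (pick N (\<lambda>n. X N n \<omega>))) (pick N (\<lambda>n. X N n \<omega>))
               (L N (k - 1) - n3) (L N (k - 1) + n1) (L N (k - 1) + n2)))"
      proof (rule AE_I2, rule impI)
        fix \<omega> assume w: "\<omega> \<in> space M" and evt: "eventually (\<lambda>N. \<omega> \<in> space M - bad N) sequentially"
        have "\<forall>\<^sub>F N in sequentially. (\<omega> \<in> space M - bad N) \<and> max N0 2 \<le> N"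
          using evt eventually_ge_at_top by (rule eventually_conj)
        then show "\<forall>\<^sub>F N in sequentially. \<not> (\<exists>n1 n2 n3.
             1 \<le> n1 \<and> n1 < n2 \<and> n2 \<le> L N k - L N (k - 1) \<and> 1 \<le> n3 \<and> n3 \<le> \<eta> N \<and>
             two_detected (sel N (\<lambda>n. X N n \<omega>) (pick N (\<lambda>n. X N n \<omega>))) (pick N (\<lambda>n. X N n \<omega>))
               (L N (k - 1) - n3) (L N (k - 1) + n1) (L N (k - 1) + n2))"
        proof (rule eventually_mono, safe)
          fix N n1 n2 n3
          assume wN: "\<omega> \<notin> bad N" and N: "max N0 2 \<le> N"
            and n: "1 \<le> n1" "n1 < n2" "n2 \<le> L N k - L N (k - 1)" "1 \<le> n3" "n3 \<le> \<eta> N"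
            and td: "two_detected (sel N (\<lambda>n. X N n \<omega>) (pick N (\<lambda>n. X N n \<omega>))) (pick N (\<lambda>n. X N n \<omega>))
               (L N (k - 1) - n3) (L N (k - 1) + n1) (L N (k - 1) + n2)"
          define x where "x = (\<lambda>n. X N n \<omega>)"
          define a where "a = L N (k - 1) - n3"
          define e' where "e' = L N (k - 1)"
          define b where "b = L N (k - 1) + n1"
          define c where "c = L N (k - 1) + n2"
          have NN0: "N \<ge> N0" using N by simp
          have k: "k \<in> {2..M0+1}" using A by simp
          have eta: "\<eta> N \<le> L N (k - 1) - L N (k - 2)" using A NN0 by simp
          have fN: "f N \<ge> 16 * (norm (\<mu> (k - 1) - \<mu> k))\<^sup>2 * real (\<eta> N)" "f N \<ge> C * ln (real N)"
            using A NN0 by auto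
          have N1: "N \<ge> 1" using N by simp
          have inc: "a < b \<and> b < c \<and> f N \<le> loss_q x (a+1) c - loss_q x (a+1) b - loss_q x (b+1) c"
            by (rule increase[OF sel_min pick_le pick_min N1]) (use td in \<open>simp add: x_def a_def b_def c_def\<close>)
          have n3L: "n3 \<le> L N (k - 1)" and La: "L N (k - 2) \<le> a"
            using n eta by (auto simp: a_def)
          have ae: "a < e'" and eb: "e' < b" and bc: "b < c"
            using n n3L by (auto simp: a_def b_def e'_def c_def)
          have ck: "c \<le> L N k" using n by (simp add: c_def)
          have k1: "k - 1 \<in> {1..M0+1}" "k \<in> {1..M0+1}" using k by auto
          have La': "L N (k - 1 - 1) \<le> a" using La by (simp add: numeral_2_eq_2)
          have g1: "(norm ((\<Sum>j=a+1..e'. x j) - real (e' - a) *\<^sub>R \<mu> (k - 1)))\<^sup>2 < real (e' - a) * f N / 16"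
            unfolding x_def by (rule good[OF N w wN k1(1) La' ae _ fN(2)]) (simp add: e'_def)
          have g2: "(norm ((\<Sum>j=e'+1..b. x j) - real (b - e') *\<^sub>R \<mu> k))\<^sup>2 < real (b - e') * f N / 16"
            unfolding x_def by (rule good[OF N w wN k1(2) _ eb _ fN(2)]) (use n in \<open>simp_all add: e'_def b_def\<close>)
          have g3: "(norm ((\<Sum>j=b+1..c. x j) - real (c - b) *\<^sub>R \<mu> k))\<^sup>2 < real (c - b) * f N / 16"
            unfolding x_def by (rule good[OF N w wN k1(2) _ bc ck fN(2)]) (simp add: b_def)
          have w3: "16 * real (e' - a) * (norm (\<mu> (k - 1) - \<mu> k))\<^sup>2 \<le> f N"
          proof -
            have "real (e' - a) \<le> real (\<eta> N)" using n n3L by (simp add: a_def e'_def)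
            then have "real (e' - a) * (16 * (norm (\<mu> (k - 1) - \<mu> k))\<^sup>2) \<le> real (\<eta> N) * (16 * (norm (\<mu> (k - 1) - \<mu> k))\<^sup>2)"
              by (rule mult_right_mono) simp
            then have "16 * real (e' - a) * (norm (\<mu> (k - 1) - \<mu> k))\<^sup>2 \<le> 16 * (norm (\<mu> (k - 1) - \<mu> k))\<^sup>2 * real (\<eta> N)"
              by (simp only: mult.commute mult.left_commute)
            then show ?thesis using fN(1) by linarith
          qed
          have lt: "((real (e' - a) + real (b - e')) * real (c - b) / ((real (e' - a) + real (b - e')) + real (c - b))) *
              (norm (((\<Sum>j=a+1..e'. x j) + (\<Sum>j=e'+1..b. x j)) /\<^sub>R (real (e' - a) + real (b - e')) - (\<Sum>j=b+1..c. x j) /\<^sub>R real (c - b)))\<^sup>2 < f N"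
            by (rule alg2[OF _ _ _ g1 g2 g3 w3]) (use ae eb bc in auto)
          have sp: "(\<Sum>j=a+1..b. x j) = (\<Sum>j=a+1..e'. x j) + (\<Sum>j=e'+1..b. x j)"
            by (rule split_ivl) (use ae eb in auto)
          have rc: "real (b - a) = real (e' - a) + real (b - e')" using ae eb by simp
          have "loss_q x (a+1) c - loss_q x (a+1) b - loss_q x (b+1) c < f N"
            unfolding merge_identity[OF order.strict_trans[OF ae eb] bc] sp rc using lt .
          then show False using inc by simp
        qed
      qed
      from AE_mp[OF BC this] show "AE \<omega> in M. \<forall>\<^sub>F N in sequentially. \<not> (\<exists>n1 n2 n3.
             1 \<le> n1 \<and> n1 < n2 \<and> n2 \<le> L N k - L N (k - 1) \<and> 1 \<le> n3 \<and> n3 \<le> \<eta> N \<and>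
             two_detected (sel N (\<lambda>n. X N n \<omega>) (pick N (\<lambda>n. X N n \<omega>))) (pick N (\<lambda>n. X N n \<omega>))
               (L N (k - 1) - n3) (L N (k - 1) + n1) (L N (k - 1) + n2))" .
    qed
  qed
qed


end
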